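(* Let $\Sigma$ be a finite alphabet and $w = w[1]w[2]\cdots w[n] \in \Sigma^*$ with $n \ge 1$. Algorithm A (described in the context) run on input $w$ returns TRUE if and only if $w \in L_{\mathrm{UNIQ}}$, i.e. if and only if $w$ is uniquely decodable from its bigrams.
   Context: Let $\$ \notin \Sigma$ be a delimiter symbol and $\Sigma_\$ = \Sigma \cup \{\$\}$. For a string $x \in \$\Sigma^*\$$, its bigram vector $\Phi(x) \in \mathbb{N}^{\Sigma_\$^2}$ records, for each pair $(c,d) \in \Sigma_\$^2$, the number of indices $j$ with $x[j]x[j+1] = cd$ (occurrences as a contiguous substring, counting overlaps). A string $w \in \Sigma^*$ is uniquely decodable, written $w \in L_{\mathrm{UNIQ}}$, if the only string $x \in \$\Sigma^*\$$ with $\Phi(x) = \Phi(\$w\$)$ is $x = \$w\$$. Algorithm A (input $w \in \Sigma^*$ of length $n$). It maintains: a "visited" flag for each $v \in \Sigma$; an "on a cycle" flag for each $v \in \Sigma$; and a directed graph $G$ with vertex set $\Sigma$ in which each ordered pair is either an edge or not. Initially no letter is visited, no letter is on a cycle, and $G$ has no edges. Mark $w[1]$ as visited. Then for $i = 2, \dots, n$: (1) If $w[i]$ has not been visited, mark it as visited. Otherwise, if the edge $w[i-1] \to w[i]$ is not already in $G$: if $w[i]$ is marked as on a cycle, return FALSE; otherwise mark $w[i]$ and all letters $w[j]$ for $j$ strictly between the previous occurrence of $w[i]$ (the largest $j_0 < i$ with $w[j_0] = w[i]$) and $i$ as on a cycle. (If the edge $w[i-1] \to w[i]$ is already in $G$,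 do nothing in this step.) (2) If there exist two distinct vertices $a, b \in \Sigma$ such that $a \to w[i]$ and $b \to w[i]$ are edges of $G$ and $a, b$ lie in the same strongly connected component of $G$ (where $a = w[i]$ or $b = w[i]$ is allowed), return FALSE. (3) Add the edge $w[i-1] \to w[i]$ to $G$. After the loop, return TRUE. *)

theory Defs
  imports Main
begin

text \<open>The delimiter $ is modelled as None in the type 'a option; letters of the
alphabet are Some a.  A string in $Sigma^*$ is thus the list
None # map Some u @ [None] for some u :: 'a list.\<close>

definition delim :: "'a list \<Rightarrow> 'a option list" where
  "delim u = None # map Some u @ [None]"

definition bigram_vec :: "'b list \<Rightarrow> ('b \<times> 'b) \<Rightarrow> nat" where
  "bigram_vec x = (\<lambda>(c, d). card {j. Suc j < length x \<and> x ! j = c \<and> x ! Suc j = d})"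

definition L_UNIQ :: "'a list set" where
  "L_UNIQ = {w. \<forall>x. (\<exists>u. x = delim u) \<and> bigram_vec x = bigram_vec (delim w) \<longrightarrow> x = delim w}"

text \<open>Algorithm A.  Positions are 0-based: w ! 0 is w[1]; loop index k = i - 1.
State: (visited, on_cycle, G); None means FALSE has been returned.\<close>

definition prev_occ :: "'a list \<Rightarrow> nat \<Rightarrow> nat" where
  "prev_occ w k = Max {j. j < k \<and> w ! j = w ! k}"

definition same_scc :: "('a \<times> 'a) set \<Rightarrow> 'a \<Rightarrow> 'a \<Rightarrow> bool" where
  "same_scc G a b \<longleftrightarrow> (a, b) \<in> G\<^sup>* \<and> (b, a) \<in> G\<^sup>*"

definition algA_step ::
  "'a list \<Rightarrow> ('a set \<times> 'a set \<times> ('a \<times> 'a) set) option \<Rightarrow> nat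
    \<Rightarrow> ('a set \<times> 'a set \<times> ('a \<times> 'a) set) option" where
  "algA_step w s k = (case s of None \<Rightarrow> None | Some (vis, cyc, G) \<Rightarrow>
     (let c = w ! k; p = w ! (k - 1);
          r1 = (if c \<notin> vis then Some (insert c vis, cyc)
                else if (p, c) \<in> G then Some (vis, cyc)
                else if c \<in> cyc then None
                else Some (vis, cyc \<union> {c} \<union> {w ! j | j. prev_occ w k < j \<and> j < k}))
      in case r1 of None \<Rightarrow> None
         | Some (vis', cyc') \<Rightarrow>
             if (\<exists>a b. a \<noteq> b \<and> (a, c) \<in> G \<and> (b, c) \<in> G \<and> same_scc G a b) then None
             else Some (vis', cyc', insert (p, c) G)))"

definition algA :: "'a list \<Rightarrow> bool" where
  "algA w = (fold (\<lambda>k s. algA_step w s k) [1..<length w] (Some ({w ! 0}, {}, {})) \<noteq> None)"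

end

theory Submission
  imports Defs "HOL-Library.Multiset"
begin

definition bg :: "'b list \<Rightarrow> ('b \<times> 'b) multiset" where
  "bg x = mset (zip x (tl x))"

lemma bigram_vec_bg: "bigram_vec x (c, d) = count (bg x) (c, d)"
proof -
  have "count (bg x) (c,d) = length (filter ((=) (c,d)) (zip x (tl x)))"
    by (simp add: bg_def count_mset count_list_eq_length_filter)
  also have "\<dots> = card {i. i < length (zip x (tl x)) \<and> (c,d) = zip x (tl x) ! i}"
    by (simp add: length_filter_conv_card)
  also have "\<dots> = card {j. Suc j < length x \<and> x ! j = c \<and> x ! Suc j = d}"
    by (rule arg_cong[where f=card]) (auto simp: nth_tl)
  finally show ?thesis by (simp add: bigram_vec_def)
qed

lemma bigram_vec_eq_iff: "bigram_vec x = bigram_vec y \<longleftrightarrow> bg x = bg y"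
proof
  assume "bigram_vec x = bigram_vec y"
  then show "bg x = bg y"
    by (intro multiset_eqI) (metis bigram_vec_bg surj_pair)
next
  assume "bg x = bg y"
  then show "bigram_vec x = bigram_vec y"
    by (intro ext) (metis bigram_vec_bg surj_pair)
qed

lemma bg_append:
  "bg (xs @ ys) = bg xs + bg ys + (if xs = [] \<or> ys = [] then {#} else {#(last xs, hd ys)#})"
proof (induction xs)
  case Nil then show ?case by (simp add: bg_def)
next
  case (Cons a xs)
  show ?case
  proof (cases xs)
    case Nil then show ?thesis by (cases ys) (auto simp: bg_def)
  next
    case (Cons b zs)
    then show ?thesis using Cons.IH by (auto simp: bg_def)
  qed
qed

lemma bg_swap:
  assumes "P \<noteq> []" "X1 \<noteq> []" "X2 \<noteq> []" "E \<noteq> []" "hd X1 = hd X2" "hd (M @ X1) = hd E"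
  shows "bg (P @ X1 @ M @ X2 @ E) = bg (P @ X2 @ M @ X1 @ E)"
proof (cases "M = []")
  case True
  then show ?thesis using assms by (simp add: bg_append ac_simps)
next
  case False
  then show ?thesis using assms by (simp add: bg_append ac_simps)
qed

lemma in_bg: "Suc s < length x \<Longrightarrow> (x!s, x!Suc s) \<in># bg x"
  unfolding bg_def by (auto simp: in_set_conv_nth nth_tl intro!: exI[of _ s])

lemma in_bgD: "p \<in># bg x \<Longrightarrow> \<exists>s. Suc s < length x \<and> p = (x!s, x!Suc s)"
proof -
  assume "p \<in># bg x"
  then obtain i where "i < length x - 1" "p = (x!i, x!Suc i)"
    unfolding bg_def by (auto simp: in_set_conv_nth nth_tl)
  then show ?thesis by (intro exI[of _ i]) auto
qed

definition Fv :: "'b list \<Rightarrow> nat \<Rightarrow> bool" where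
  "Fv w t \<longleftrightarrow> (\<exists>j i k. 1 \<le> j \<and> j < t \<and> w!j = w!t \<and> w!(j-1) \<noteq> w!(t-1) \<and>
                 i < j \<and> j \<le> k \<and> k < t \<and> w!i = w!k)"

definition Gw :: "'b list \<Rightarrow> nat \<Rightarrow> ('b \<times> 'b) set" where
  "Gw w t = {(w!(s-1), w!s) | s. 1 \<le> s \<and> s < t}"

lemma Gw_mem: "(x,y) \<in> Gw w t \<longleftrightarrow> (\<exists>s. 1 \<le> s \<and> s < t \<and> w!(s-1) = x \<and> w!s = y)"
  unfolding Gw_def by auto

lemma Gw_edge: "1 \<le> s \<Longrightarrow> s < t \<Longrightarrow> (w!(s-1), w!s) \<in> Gw w t"
  unfolding Gw_mem by blast

lemma pos_rtrancl: "a \<le> b \<Longrightarrow> b < t \<Longrightarrow> (w!a, w!b) \<in> (Gw w t)\<^sup>*"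
proof (induction b)
  case 0 then show ?case by simp
next
  case (Suc b)
  show ?case
  proof (cases "a = Suc b")
    case True then show ?thesis by simp
  next
    case False
    then have "(w!a, w!b) \<in> (Gw w t)\<^sup>*" using Suc by simp
    moreover have "(w!b, w!Suc b) \<in> Gw w t" using Gw_edge[of "Suc b" t w] Suc by simp
    ultimately show ?thesis by (rule rtrancl_into_rtrancl)
  qed
qed

lemma pos_trancl: "a < b \<Longrightarrow> b < t \<Longrightarrow> (w!a, w!b) \<in> (Gw w t)\<^sup>+"
proof -
  assume "a < b" "b < t"
  then have "(w!a, w!(b-1)) \<in> (Gw w t)\<^sup>*" by (intro pos_rtrancl) auto
  moreover have "(w!(b-1), w!b) \<in> Gw w t" using \<open>a<b\<close> \<open>b<t\<close> by (intro Gw_edge) auto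
  ultimately show ?thesis by (rule rtrancl_into_trancl1)
qed

definition split_at :: "'b list \<Rightarrow> nat \<Rightarrow> nat \<Rightarrow> bool" where
  "split_at w j0 t \<longleftrightarrow> (\<forall>i k. i < j0 \<longrightarrow> j0 \<le> k \<longrightarrow> k < t \<longrightarrow> w!i \<noteq> w!k)"

lemma closure:
  assumes sp: "split_at w j0 t" and "j0 \<le> a" "a < t" and "(w!a, y) \<in> (Gw w t)\<^sup>*"
  shows "\<exists>b. j0 \<le> b \<and> b < t \<and> w!b = y"
  using assms(4)
proof (induction rule: rtrancl_induct)
  case base then show ?case using assms by auto
next
  case (step y z)
  then obtain b where b: "j0 \<le> b" "b < t" "w!b = y" by auto
  from step(2) obtain s where s: "1 \<le> s" "s < t" "w!(s-1) = y" "w!s = z" by (auto simp: Gw_mem)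
  have "\<not> s - 1 < j0" using sp b s unfolding split_at_def by metis
  then show ?case using s by (intro exI[of _ s]) auto
qed

lemma straddle_cyc:
  assumes "1 \<le> j" "i < j" "j \<le> k" "k < t" "w!i = w!k"
  shows "(w!j, w!j) \<in> (Gw w t)\<^sup>+"
proof -
  have "(w!j, w!k) \<in> (Gw w t)\<^sup>*" using assms by (intro pos_rtrancl) auto
  moreover have "(w!i, w!(j-1)) \<in> (Gw w t)\<^sup>*" using assms by (intro pos_rtrancl) auto
  ultimately have "(w!j, w!(j-1)) \<in> (Gw w t)\<^sup>*" using assms(5) by simp
  moreover have "(w!(j-1), w!j) \<in> Gw w t" using assms by (intro Gw_edge) auto
  ultimately show ?thesis by (rule rtrancl_into_trancl1)
qed

lemma F_cyc: "Fv w t \<Longrightarrow> (w!t, w!t) \<in> (Gw w t)\<^sup>+"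
  unfolding Fv_def using straddle_cyc by metis

lemma cyc_noedge_F:
  assumes "(w!t, w!t) \<in> (Gw w t)\<^sup>+" "(w!(t-1), w!t) \<notin> Gw w t"
  shows "Fv w t"
proof -
  obtain y where y: "(w!t, y) \<in> (Gw w t)\<^sup>*" "(y, w!t) \<in> Gw w t" using tranclD2[OF assms(1)] by blast
  from y(2) obtain s where s: "1 \<le> s" "s < t" "w!(s-1) = y" "w!s = w!t" by (auto simp: Gw_mem)
  have "y \<noteq> w!(t-1)" using assms(2) y(2) by auto
  show ?thesis
  proof (cases "split_at w s t")
    case True
    have "(w!s, y) \<in> (Gw w t)\<^sup>*" using y s by simp
    from closure[OF True _ _ this] s obtain b where "s \<le> b" "b < t" "w!b = y" by auto
    with True s show ?thesis unfolding split_at_def by (metis diff_less less_numeral_extra(1) order_less_le_trans)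
  next
    case False
    then obtain i k where "i < s" "s \<le> k" "k < t" "w!i = w!k" unfolding split_at_def by blast
    then show ?thesis unfolding Fv_def using s \<open>y \<noteq> w!(t-1)\<close> by blast
  qed
qed

lemma two_in_F:
  assumes "1 \<le> lo" "lo < hi" "hi < t" "w!lo = w!t" "w!hi = w!t" "w!(lo-1) \<noteq> w!(hi-1)"
    "(w!(hi-1), w!(lo-1)) \<in> (Gw w t)\<^sup>*"
  shows "Fv w t"
proof (cases "w!(hi-1) = w!(t-1)")
  case False
  then show ?thesis unfolding Fv_def using assms
    by (intro exI[of _ hi] exI[of _ lo]) auto
next
  case True
  then have ne: "w!(lo-1) \<noteq> w!(t-1)" using assms by simp
  show ?thesis
  proof (cases "split_at w lo t")
    case True
    have "lo \<le> hi - 1" "hi - 1 < t" using assms by auto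
    from closure[OF True this assms(7)] obtain b where "lo \<le> b" "b < t" "w!b = w!(lo-1)" by auto
    with True assms(1) show ?thesis unfolding split_at_def by (metis diff_less less_numeral_extra(1) order_less_le_trans)
  next
    case False
    then obtain i k where "i < lo" "lo \<le> k" "k < t" "w!i = w!k" unfolding split_at_def by blast
    then show ?thesis unfolding Fv_def using assms ne by (intro exI[of _ lo] exI[of _ i] exI[of _ k]) auto
  qed
qed

lemma Cond2_F:
  assumes "\<exists>a b. a \<noteq> b \<and> (a, w!t) \<in> Gw w t \<and> (b, w!t) \<in> Gw w t \<and> same_scc (Gw w t) a b"
  shows "Fv w t"
proof -
  obtain a b where ab: "a \<noteq> b" "(a, w!t) \<in> Gw w t" "(b, w!t) \<in> Gw w t" "same_scc (Gw w t) a b"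
    using assms by blast
  obtain sa where sa: "1 \<le> sa" "sa < t" "w!(sa-1) = a" "w!sa = w!t" using ab(2) by (auto simp: Gw_mem)
  obtain sb where sb: "1 \<le> sb" "sb < t" "w!(sb-1) = b" "w!sb = w!t" using ab(3) by (auto simp: Gw_mem)
  have "sa \<noteq> sb" using ab sa sb by auto
  then consider "sa < sb" | "sb < sa" by linarith
  then show ?thesis
  proof cases
    case 1 then show ?thesis using ab sa sb unfolding same_scc_def
      by (intro two_in_F[of sa sb]) auto
  next
    case 2 then show ?thesis using ab sa sb unfolding same_scc_def
      by (intro two_in_F[of sb sa]) auto
  qed
qed

lemma F_edge_Cond2:
  assumes hyp: "\<forall>s. 1 \<le> s \<and> s < t \<longrightarrow> \<not> Fv w s" and F: "Fv w t"
    and e: "(w!(t-1), w!t) \<in> Gw w t"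
  shows "\<exists>a b. a \<noteq> b \<and> (a, w!t) \<in> Gw w t \<and> (b, w!t) \<in> Gw w t \<and> same_scc (Gw w t) a b"
proof -
  obtain j i k where jik: "1 \<le> j" "j < t" "w!j = w!t" "w!(j-1) \<noteq> w!(t-1)"
      "i < j" "j \<le> k" "k < t" "w!i = w!k" using F unfolding Fv_def by blast
  obtain s where s: "1 \<le> s" "s < t" "w!(s-1) = w!(t-1)" "w!s = w!t" using e by (auto simp: Gw_mem)
  have d1: "(w!(j-1), w!t) \<in> Gw w t" using Gw_edge[of j t w] jik by simp
  have r1: "(w!(j-1), w!(t-1)) \<in> (Gw w t)\<^sup>*" using jik by (intro pos_rtrancl) auto
  have r2: "(w!(t-1), w!(j-1)) \<in> (Gw w t)\<^sup>*"
  proof (cases "s \<le> j")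
    case True
    then have "(w!(s-1), w!(j-1)) \<in> (Gw w t)\<^sup>*" using jik by (intro pos_rtrancl) auto
    then show ?thesis using s by simp
  next
    case False
    have "s \<le> k"
    proof (rule ccontr)
      assume "\<not> s \<le> k"
      then have "Fv w s" unfolding Fv_def using jik s False
        by (intro exI[of _ j] exI[of _ i] exI[of _ k]) auto
      then show False using hyp s by blast
    qed
    then have "(w!(s-1), w!k) \<in> (Gw w t)\<^sup>*" using jik by (intro pos_rtrancl) auto
    moreover have "(w!i, w!(j-1)) \<in> (Gw w t)\<^sup>*" using jik by (intro pos_rtrancl) auto
    ultimately show ?thesis using s jik by (metis rtrancl_trans)
  qed
  show ?thesis using jik d1 e r1 r2 unfolding same_scc_def by blast
qed

definition st :: "'a list \<Rightarrow> nat \<Rightarrow> ('a set \<times> 'a set \<times> ('a \<times> 'a) set) option" where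
  "st w t = Some (set (take t w), {x. (x,x) \<in> (Gw w t)\<^sup>+}, Gw w t)"

lemma in_take_iff: "t \<le> length w \<Longrightarrow> x \<in> set (take t w) \<longleftrightarrow> (\<exists>j<t. w!j = x)"
  by (auto simp: in_set_conv_nth)

lemma Gw_Suc: "1 \<le> t \<Longrightarrow> Gw w (Suc t) = insert (w!(t-1), w!t) (Gw w t)"
  unfolding Gw_def by (auto simp: less_Suc_eq)

lemma take_Suc_set: "t < length w \<Longrightarrow> set (take (Suc t) w) = insert (w!t) (set (take t w))"
  by (simp add: take_Suc_conv_app_nth)

lemma step_lemma:
  assumes t1: "1 \<le> t" and tl: "t < length w" and hyp: "\<forall>s. 1 \<le> s \<and> s < t \<longrightarrow> \<not> Fv w s"
  shows "algA_step w (st w t) t = (if Fv w t then None else st w (Suc t))"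
proof -
  define c where "c = w!t"
  define p where "p = w!(t-1)"
  define G where "G = Gw w t"
  define vis where "vis = set (take t w)"
  define cyc where "cyc = {x. (x,x) \<in> G\<^sup>+}"
  define Cond2 where "Cond2 = (\<exists>a b. a \<noteq> b \<and> (a, c) \<in> G \<and> (b, c) \<in> G \<and> same_scc G a b)"
  have C2F: "Cond2 \<Longrightarrow> Fv w t" unfolding Cond2_def c_def G_def by (rule Cond2_F)
  have stS: "st w (Suc t) = Some (insert c vis, {x. (x,x) \<in> (insert (p,c) G)\<^sup>+}, insert (p,c) G)"
    unfolding st_def vis_def c_def p_def G_def using t1 tl by (simp add: Gw_Suc take_Suc_set)
  have A: "algA_step w (st w t) t =
     (let r1 = (if c \<notin> vis then Some (insert c vis, cyc)
                else if (p, c) \<in> G then Some (vis, cyc)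
                else if c \<in> cyc then None
                else Some (vis, cyc \<union> {c} \<union> {w ! j | j. prev_occ w t < j \<and> j < t}))
      in case r1 of None \<Rightarrow> None
         | Some (vis', cyc') \<Rightarrow>
             if Cond2 then None
             else Some (vis', cyc', insert (p, c) G))"
    unfolding algA_step_def st_def c_def p_def G_def vis_def cyc_def Cond2_def by (simp only: Let_def option.simps prod.simps)
  show ?thesis
  proof (cases "c \<in> vis")
    case False
    then have nocc: "\<forall>j<t. w!j \<noteq> c" using in_take_iff[of t w] tl unfolding vis_def by auto
    have nF: "\<not> Fv w t" unfolding Fv_def using nocc c_def by auto
    have nC: "\<not> Cond2" using C2F nF by blast
    have noout: "\<And>y. (c,y) \<notin> G"
    proof
      fix y assume "(c,y) \<in> G"
      then obtain s where "1 \<le> s" "s < t" "w!(s-1) = c" unfolding G_def by (auto simp: Gw_mem)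
      then show False using nocc by (metis diff_le_self le_less_trans)
    qed
    have rt: "\<And>y. (c,y) \<in> G\<^sup>* \<Longrightarrow> y = c"
      by (erule converse_rtranclE) (auto simp: noout)
    have "p \<noteq> c" using nocc t1 unfolding p_def by (metis diff_less less_numeral_extra(1) order_less_le_trans)
    then have "{x. (x,x) \<in> (insert (p,c) G)\<^sup>+} = cyc"
      unfolding cyc_def trancl_insert using rt by auto
    then show ?thesis using A False nF nC stS by simp
  next
    case True
    then obtain j0 where j0: "j0 < t" "w!j0 = c" using in_take_iff[of t w] tl unfolding vis_def by auto
    have visS: "insert c vis = vis" using True by auto
    show ?thesis
    proof (cases "(p,c) \<in> G")
      case True
      have "Cond2 \<longleftrightarrow> Fv w t"
        using C2F F_edge_Cond2[OF hyp] True unfolding Cond2_def G_def p_def c_def by blast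
      moreover have "insert (p,c) G = G" using True by auto
      ultimately show ?thesis using A \<open>c \<in> vis\<close> True stS visS unfolding cyc_def by simp
    next
      case False
      show ?thesis
      proof (cases "c \<in> cyc")
        case True
        then have "Fv w t" using cyc_noedge_F False unfolding cyc_def G_def c_def p_def by blast
        have r: "algA_step w (st w t) t = None" unfolding A Let_def using \<open>c \<in> vis\<close> False True by simp
        show ?thesis unfolding r using \<open>Fv w t\<close> by simp
      next
        case ncyc: False
        have nF: "\<not> Fv w t" using F_cyc ncyc unfolding cyc_def G_def c_def by blast
        have nC: "\<not> Cond2" using C2F nF by blast
        have uniq: "\<And>j. j < t \<Longrightarrow> w!j = c \<Longrightarrow> j = j0"
        proof (rule ccontr)
          fix j assume "j < t" "w!j = c" "j \<noteq> j0"
          then consider "j < j0" | "j0 < j" by linarith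
          then have "(c,c) \<in> G\<^sup>+" using pos_trancl[of j j0 t w] pos_trancl[of j0 j t w] j0 \<open>j<t\<close> \<open>w!j = c\<close>
            unfolding G_def by cases auto
          then show False using ncyc unfolding cyc_def by simp
        qed
        have sp: "split_at w j0 t"
          unfolding split_at_def
        proof (intro allI impI)
          fix i k assume "i < j0" "j0 \<le> k" "k < t"
          show "w!i \<noteq> w!k"
          proof
            assume "w!i = w!k"
            then have "(w!j0, w!j0) \<in> (Gw w t)\<^sup>+" using straddle_cyc[of j0 i k t w] \<open>i<j0\<close> \<open>j0\<le>k\<close> \<open>k<t\<close> by auto
            then show False using ncyc j0 unfolding cyc_def G_def by simp
          qed
        qed
        have po: "prev_occ w t = j0"
        proof -
          have "{j. j < t \<and> w!j = w!t} = {j0}"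
          proof (intro set_eqI iffI)
            fix j assume "j \<in> {j. j < t \<and> w!j = w!t}"
            then show "j \<in> {j0}" using uniq[of j] unfolding c_def by simp
          next
            fix j assume "j \<in> {j0}"
            then show "j \<in> {j. j < t \<and> w!j = w!t}" using j0 unfolding c_def by simp
          qed
          then show ?thesis unfolding prev_occ_def by simp
        qed
        have tp: "t - 1 < t" using t1 by simp
        have eq: "{x. (x,x) \<in> (insert (p,c) G)\<^sup>+} = cyc \<union> {c} \<union> {w ! j | j. j0 < j \<and> j < t}"
        proof (rule set_eqI)
          fix x
          have "x \<in> {x. (x,x) \<in> (insert (p,c) G)\<^sup>+} \<longleftrightarrow> x \<in> cyc \<or> ((x,p) \<in> G\<^sup>* \<and> (c,x) \<in> G\<^sup>*)"
            unfolding cyc_def trancl_insert by auto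
          also have "\<dots> \<longleftrightarrow> x \<in> cyc \<or> (\<exists>b. j0 \<le> b \<and> b < t \<and> w!b = x)"
          proof -
            have "(x,p) \<in> G\<^sup>* \<and> (c,x) \<in> G\<^sup>* \<longleftrightarrow> (\<exists>b. j0 \<le> b \<and> b < t \<and> w!b = x)"
            proof
              assume "(x,p) \<in> G\<^sup>* \<and> (c,x) \<in> G\<^sup>*"
              then show "\<exists>b. j0 \<le> b \<and> b < t \<and> w!b = x"
                using closure[OF sp, of j0 x] j0 unfolding G_def by auto
            next
              assume "\<exists>b. j0 \<le> b \<and> b < t \<and> w!b = x"
              then obtain b where b: "j0 \<le> b" "b < t" "w!b = x" by blast
              have "(c,x) \<in> G\<^sup>*" using pos_rtrancl[of j0 b t w] b j0 unfolding G_def by simp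
              moreover have "(x,p) \<in> G\<^sup>*" using pos_rtrancl[of b "t-1" t w] b tp unfolding G_def p_def by simp
              ultimately show "(x,p) \<in> G\<^sup>* \<and> (c,x) \<in> G\<^sup>*" by simp
            qed
            then show ?thesis by simp
          qed
          also have "\<dots> \<longleftrightarrow> x \<in> cyc \<union> {c} \<union> {w ! j | j. j0 < j \<and> j < t}"
            using j0 by (auto simp: le_less)
          finally show "x \<in> {x. (x,x) \<in> (insert (p,c) G)\<^sup>+} \<longleftrightarrow> x \<in> cyc \<union> {c} \<union> {w ! j | j. j0 < j \<and> j < t}" .
        qed
        show ?thesis using A \<open>c \<in> vis\<close> False ncyc nF nC stS visS po eq by simp
      qed
    qed
  qed
qed

lemma fold_inv:
  assumes "1 \<le> t" "t \<le> length w"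
  shows "fold (\<lambda>k s. algA_step w s k) [1..<t] (Some ({w ! 0}, {}, {})) =
         (if \<exists>s. 1 \<le> s \<and> s < t \<and> Fv w s then None else st w t)"
  using assms
proof (induction t rule: dec_induct)
  case base
  have "Gw w 1 = {}" unfolding Gw_def by auto
  moreover have "set (take 1 w) = {w!0}" using assms by (cases w) auto
  ultimately show ?case by (simp add: st_def)
next
  case (step t)
  have none: "algA_step w None t = None" unfolding algA_step_def by simp
  have ups: "[1..<Suc t] = [1..<t] @ [t]" using step by simp
  have F1: "fold (\<lambda>k s. algA_step w s k) [1..<Suc t] (Some ({w ! 0}, {}, {})) =
     algA_step w (fold (\<lambda>k s. algA_step w s k) [1..<t] (Some ({w ! 0}, {}, {}))) t"
    unfolding ups by simp
  have IH: "fold (\<lambda>k s. algA_step w s k) [1..<t] (Some ({w ! 0}, {}, {})) =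
         (if \<exists>s. 1 \<le> s \<and> s < t \<and> Fv w s then None else st w t)"
    using step by simp
  show ?case
  proof (cases "\<exists>s. 1 \<le> s \<and> s < t \<and> Fv w s")
    case True
    have ex2: "\<exists>s. 1 \<le> s \<and> s < Suc t \<and> Fv w s" using True by auto
    show ?thesis unfolding F1 IH if_P[OF True] none if_P[OF ex2] by simp
  next
    case False
    then have "fold (\<lambda>k s. algA_step w s k) [1..<Suc t] (Some ({w ! 0}, {}, {})) =
       algA_step w (st w t) t" unfolding F1 IH if_not_P[OF False] by simp
    also have "\<dots> = (if Fv w t then None else st w (Suc t))"
      using step_lemma[of t w] step False by auto
    finally have E: "fold (\<lambda>k s. algA_step w s k) [1..<Suc t] (Some ({w ! 0}, {}, {})) = (if Fv w t then None else st w (Suc t))" .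
    have "(\<exists>s. 1 \<le> s \<and> s < Suc t \<and> Fv w s) \<longleftrightarrow> Fv w t" using False step by (auto simp: less_Suc_eq)
    then show ?thesis unfolding E by simp
  qed
qed

lemma algA_iff: "1 \<le> length w \<Longrightarrow> algA w \<longleftrightarrow> \<not> (\<exists>s. 1 \<le> s \<and> s < length w \<and> Fv w s)"
  unfolding algA_def using fold_inv[of "length w" w] by (auto simp: st_def)

lemma length_delim: "length (delim w) = length w + 2"
  by (simp add: delim_def)

lemma delim_nth: "s < length w + 2 \<Longrightarrow>
   delim w ! s = (if s = 0 then None else if s \<le> length w then Some (w!(s-1)) else None)"
  by (cases s) (auto simp: delim_def nth_append)

lemma size_bg: "size (bg x) = length x - 1"
  by (simp add: bg_def)

lemma diff_lemma:
  fixes V V' :: "'b list"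
  assumes len: "length V = length V'" and ne: "V \<noteq> V'" and bgeq: "bg V = bg V'"
    and L1: "1 \<le> length V" and lst: "V!(length V - 1) = V'!(length V - 1)"
  shows "\<exists>m j i k. Suc m < length V \<and> V!m \<noteq> V'!m \<and> 1 \<le> j \<and> j \<le> m \<and> V!j = V!(Suc m) \<and>
     V!(j-1) = V'!m \<and> i < j \<and> j \<le> k \<and> k \<le> m \<and> V!i = V!k"
proof -
  define L where "L = length V"
  define D where "D = {s. s < L \<and> V!s \<noteq> V'!s}"
  have Dne: "D \<noteq> {}"
  proof
    assume "D = {}"
    then have "V = V'" using len by (intro nth_equalityI) (auto simp: D_def L_def)
    then show False using ne by simp
  qed
  have Dfin: "finite D" unfolding D_def by simp
  define m where "m = Max D"
  have mD: "m \<in> D" unfolding m_def using Dne Dfin by simp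
  have mmax: "\<And>s. s \<in> D \<Longrightarrow> s \<le> m" unfolding m_def using Dfin by simp
  have mL: "Suc m < L"
  proof -
    have "m < L" using mD unfolding D_def by simp
    moreover have "m \<noteq> L - 1" using mD lst unfolding D_def L_def by auto
    ultimately show ?thesis by linarith
  qed
  have suf: "\<And>s. m < s \<Longrightarrow> s < L \<Longrightarrow> V!s = V'!s"
    using mmax unfolding D_def by force
  have VVne: "V \<noteq> []" "V' \<noteq> []" using mL len unfolding L_def by auto
  define T where "T = take (Suc m) V"
  define T' where "T' = take (Suc m) V'"
  have dropeq: "drop (Suc m) V = drop (Suc m) V'"
    using len suf by (intro nth_equalityI) (auto simp: L_def)
  define e where "e = V!m"
  define d where "d = V'!m"
  define c where "c = V!Suc m"
  have ed: "e \<noteq> d" using mD unfolding D_def e_def d_def by simp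
  have bgV: "bg V = bg T + bg (drop (Suc m) V) + {#(e, c)#}"
  proof -
    have "V = T @ drop (Suc m) V" unfolding T_def by simp
    then have "bg V = bg (T @ drop (Suc m) V)" by simp
    also have "\<dots> = bg T + bg (drop (Suc m) V) + {#(e, c)#}"
      using mL L1 unfolding bg_append T_def e_def c_def L_def
      using VVne by (auto simp: last_conv_nth hd_drop_conv_nth min_def)
    finally show ?thesis .
  qed
  have bgV': "bg V' = bg T' + bg (drop (Suc m) V) + {#(d, c)#}"
  proof -
    have "V' = T' @ drop (Suc m) V'" unfolding T'_def by simp
    then have "bg V' = bg (T' @ drop (Suc m) V')" by simp
    also have "\<dots> = bg T' + bg (drop (Suc m) V') + {#(d, V'!Suc m)#}"
      using mL len VVne unfolding bg_append T'_def d_def L_def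
      by (auto simp: last_conv_nth hd_drop_conv_nth min_def)
    finally show ?thesis using dropeq suf[of "Suc m"] mL unfolding c_def by simp
  qed
  have key: "bg T + {#(e, c)#} = bg T' + {#(d, c)#}"
    using bgeq bgV bgV' by (simp add: ac_simps)
  have "(d, c) \<in># bg T"
  proof -
    have "(d,c) \<in># bg T + {#(e, c)#}" using key by simp
    then show ?thesis using ed by auto
  qed
  then obtain s where s: "Suc s < length T" "(d,c) = (T!s, T!Suc s)" using in_bgD by blast
  have sm: "Suc s \<le> m" using s mL unfolding T_def L_def by simp
  define j where "j = Suc s"
  have jV: "V!(j-1) = d" "V!j = c" using s sm unfolding j_def T_def by auto
  have straddle: "\<exists>i k. i < j \<and> j \<le> k \<and> k \<le> m \<and> V!i = V!k"
  proof (rule ccontr)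
    assume H: "\<not> (\<exists>i k. i < j \<and> j \<le> k \<and> k \<le> m \<and> V!i = V!k)"
    define Q where "Q = {V!b | b. j \<le> b \<and> b \<le> m}"
    have closT: "\<And>x y. (x,y) \<in># bg T \<Longrightarrow> x \<in> Q \<Longrightarrow> y \<in> Q"
    proof -
      fix x y assume xy: "(x,y) \<in># bg T" and xQ: "x \<in> Q"
      obtain s' where s': "Suc s' < length T" "(x,y) = (T!s', T!Suc s')" using in_bgD[OF xy] by blast
      have s'm: "Suc s' \<le> m" using s' mL unfolding T_def L_def by simp
      have xv: "x = V!s'" "y = V!Suc s'" using s' s'm unfolding T_def by auto
      obtain b where b: "j \<le> b" "b \<le> m" "V!b = x" using xQ unfolding Q_def by blast
      have "\<not> s' < j" using H b xv by metis
      then show "y \<in> Q" unfolding Q_def using xv s'm by auto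
    qed
    have dQ: "d \<notin> Q"
    proof
      assume "d \<in> Q"
      then obtain b where "j \<le> b" "b \<le> m" "V!b = d" unfolding Q_def by blast
      then show False using H jV unfolding j_def by (metis diff_Suc_1 lessI)
    qed
    have eQ: "e \<in> Q" unfolding Q_def e_def using sm j_def by auto
    have cQ: "c \<in> Q" unfolding Q_def using jV sm j_def by auto
    have closT': "\<And>x y. (x,y) \<in># bg T' \<Longrightarrow> x \<in> Q \<Longrightarrow> y \<in> Q"
    proof -
      fix x y assume xy: "(x,y) \<in># bg T'" "x \<in> Q"
      have "(x,y) \<in># bg T + {#(e, c)#}" using key xy(1) by simp
      then consider "(x,y) \<in># bg T" | "(x,y) = (e,c)" by auto
      then show "y \<in> Q" using closT xy(2) cQ by cases auto
    qed
    have "(e, c) \<in># bg T'"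
    proof -
      have "(e,c) \<in># bg T' + {#(d, c)#}" using key[symmetric] by simp
      then show ?thesis using ed by auto
    qed
    then obtain s0 where s0: "Suc s0 < length T'" "(e,c) = (T'!s0, T'!Suc s0)" using in_bgD by blast
    have s0m: "Suc s0 \<le> m" using s0 mL len unfolding T'_def L_def by simp
    have V's0: "V'!s0 \<in> Q" using s0 s0m eQ unfolding T'_def by auto
    have all: "\<And>n. s0 + n \<le> m \<Longrightarrow> V'!(s0+n) \<in> Q"
    proof -
      fix n show "s0 + n \<le> m \<Longrightarrow> V'!(s0+n) \<in> Q"
      proof (induction n)
        case 0 then show ?case using V's0 by simp
      next
        case (Suc n)
        have lt: "Suc (s0 + n) < length T'" using Suc.prems mL len unfolding T'_def L_def by simp
        have "(T'!(s0+n), T'!Suc (s0+n)) \<in># bg T'" using in_bg[OF lt] .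
        moreover have "T'!(s0+n) = V'!(s0+n)" "T'!Suc (s0+n) = V'!(s0 + Suc n)"
          using Suc.prems unfolding T'_def by auto
        ultimately show ?case using closT' Suc by auto
      qed
    qed
    have "V'!m \<in> Q" using all[of "m - s0"] s0m by simp
    then show False using dQ unfolding d_def by simp
  qed
  then obtain i k where "i < j" "j \<le> k" "k \<le> m" "V!i = V!k" by blast
  then show ?thesis using mL jV sm mD unfolding L_def j_def d_def c_def D_def
    by (intro exI[of _ m] exI[of _ "Suc s"] exI[of _ i] exI[of _ k]) auto
qed

lemma F_not_uniq:
  assumes tl: "t < length w" and F: "Fv w t"
  shows "w \<notin> L_UNIQ"
proof -
  obtain j i k where jik: "1 \<le> j" "j < t" "w!j = w!t" "w!(j-1) \<noteq> w!(t-1)"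
      "i < j" "j \<le> k" "k < t" "w!i = w!k" using F unfolding Fv_def by blast
  define A where "A = take i w"
  define X1 where "X1 = drop i (take j w)"
  define M where "M = drop j (take k w)"
  define X2 where "X2 = drop k (take t w)"
  define E where "E = drop t w"
  have wdec: "w = A @ X1 @ M @ X2 @ E"
  proof -
    have "take j w = A @ X1" unfolding A_def X1_def using jik
      by (metis append_take_drop_id min.absorb1 less_imp_le take_take)
    moreover have "take k w = take j w @ M" unfolding M_def using jik
      by (metis append_take_drop_id min.absorb1 take_take)
    moreover have "take t w = take k w @ X2" unfolding X2_def using jik
      by (metis append_take_drop_id min.absorb1 less_imp_le take_take)
    moreover have "w = take t w @ E" unfolding E_def by simp
    ultimately show ?thesis by simp
  qed
  define u where "u = A @ X2 @ M @ X1 @ E"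
  have lX1: "length X1 = j - i" unfolding X1_def using jik tl by simp
  have lX2: "length X2 = t - k" unfolding X2_def using jik tl by simp
  have lM: "length M = k - j" unfolding M_def using jik tl by simp
  have lA: "length A = i" unfolding A_def using jik tl by simp
  have X1ne: "X1 \<noteq> []" "X2 \<noteq> []" "E \<noteq> []" using lX1 lX2 jik tl unfolding E_def by auto
  have hX1: "hd X1 = w!i" unfolding X1_def using jik tl by (simp add: hd_drop_conv_nth)
  have hX2: "hd X2 = w!k" unfolding X2_def using jik tl by (simp add: hd_drop_conv_nth)
  have hE: "hd E = w!t" unfolding E_def using tl by (simp add: hd_drop_conv_nth)
  have lastX1: "last X1 = w!(j-1)" unfolding X1_def using jik tl by (simp add: last_conv_nth)
  have hMX1: "hd (M @ X1) = hd E"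
  proof (cases "j = k")
    case True
    then have "M = []" unfolding M_def by simp
    then show ?thesis using hX1 hE jik True by simp
  next
    case False
    then have "M \<noteq> []" "hd M = w!j" unfolding M_def using jik tl by (auto simp: hd_drop_conv_nth)
    then show ?thesis using hE jik by simp
  qed
  have bgeq: "bg (delim w) = bg (delim u)"
  proof -
    have "delim w = (None # map Some A) @ map Some X1 @ map Some M @ map Some X2 @ (map Some E @ [None])"
      unfolding delim_def by (subst wdec) simp
    moreover have "delim u = (None # map Some A) @ map Some X2 @ map Some M @ map Some X1 @ (map Some E @ [None])"
      unfolding delim_def u_def by simp
    moreover have "hd (map Some M @ map Some X1) = hd (map Some E @ [None])"
      using hMX1 X1ne by (cases M) (auto simp: hd_map)
    ultimately show ?thesis using X1ne hX1 hX2 jik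
      by (simp only:) (rule bg_swap, auto simp: hd_map)
  qed
  have "u \<noteq> w"
  proof
    assume "u = w"
    have "take t u = A @ X2 @ M @ X1" unfolding u_def using lA lX1 lX2 lM jik by simp
    then have L1: "last (take t u) = w!(j-1)" using lastX1 X1ne by simp
    have t0: "take t w \<noteq> []" using tl jik by (cases w) auto
    moreover have "last (take t w) = w!(t-1)" using tl jik t0 by (simp add: last_conv_nth)
    ultimately show False using L1 \<open>u = w\<close> jik by simp
  qed
  then have ne: "delim u \<noteq> delim w" unfolding delim_def by simp
  have bv: "bigram_vec (delim u) = bigram_vec (delim w)" using bgeq bigram_vec_eq_iff by metis
  show ?thesis
  proof
    assume "w \<in> L_UNIQ"
    then have "delim u = delim w" unfolding L_UNIQ_def using bv by blast
    then show False using ne by simp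
  qed
qed

lemma not_uniq_F:
  assumes "w \<notin> L_UNIQ"
  shows "\<exists>t. 1 \<le> t \<and> t < length w \<and> Fv w t"
proof -
  obtain u where u: "bigram_vec (delim u) = bigram_vec (delim w)" "delim u \<noteq> delim w"
    using assms unfolding L_UNIQ_def by blast
  define V where "V = delim w"
  define V' where "V' = delim u"
  define n where "n = length w"
  have bgeq: "bg V = bg V'" using u bigram_vec_eq_iff unfolding V_def V'_def by metis
  have "length V = length V'"
    using arg_cong[OF bgeq, of size] unfolding size_bg V_def V'_def by (simp add: length_delim)
  then have lu: "length u = n" unfolding V_def V'_def using n_def by (simp add: length_delim)
  have lV: "length V = n + 2" "length V' = n + 2" using lu n_def by (simp_all add: V_def V'_def length_delim)
  have dV: "\<And>s. s < n + 2 \<Longrightarrow> V!s = (if s = 0 then None else if s \<le> n then Some (w!(s-1)) else None)"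
    unfolding V_def n_def by (rule delim_nth)
  have dV': "\<And>s. s < n + 2 \<Longrightarrow> V'!s = (if s = 0 then None else if s \<le> n then Some (u!(s-1)) else None)"
    unfolding V'_def using delim_nth[of _ u] lu by simp
  obtain m j i k where mjik: "Suc m < length V" "V!m \<noteq> V'!m" "1 \<le> j" "j \<le> m" "V!j = V!(Suc m)"
     "V!(j-1) = V'!m" "i < j" "j \<le> k" "k \<le> m" "V!i = V!k"
  proof -
    have "V!(length V - 1) = V'!(length V - 1)" using lV dV[of "n+1"] dV'[of "n+1"] by simp
    moreover have "V \<noteq> V'" using u(2) unfolding V_def V'_def by simp
    ultimately show ?thesis using diff_lemma[of V V'] lV bgeq that by auto
  qed
  have m1: "m \<noteq> 0"
  proof
    assume "m = 0" then show False using mjik(2) dV[of 0] dV'[of 0] by simp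
  qed
  have mn: "m \<le> n" using mjik(1) lV by simp
  have V'm: "V'!m \<noteq> None" using dV'[of m] m1 mn by simp
  have j2: "j - 1 \<noteq> 0"
  proof
    assume "j - 1 = 0"
    then have "V!(j-1) = None" using dV[of 0] by simp
    then show False using mjik(6) V'm by simp
  qed
  have jk: "2 \<le> j" "j \<le> k" "k \<le> m" "i < j" using j2 mjik by auto
  have k2: "V!k = Some (w!(k-1))"
  proof -
    have "k \<noteq> 0" "k \<le> n" "k < n + 2" using jk mn by auto
    then show ?thesis using dV[of k] by simp
  qed
  have i1: "i \<noteq> 0"
  proof
    assume "i = 0" then have "V!i = None" using dV[of 0] by simp
    then show False using k2 mjik(10) by simp
  qed
  have Vj: "V!j = Some (w!(j-1))"
  proof -
    have "j \<noteq> 0" "j \<le> n" "j < n + 2" using jk mn by auto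
    then show ?thesis using dV[of j] by simp
  qed
  have Sm: "Suc m \<le> n"
  proof (rule ccontr)
    assume "\<not> Suc m \<le> n"
    moreover have "Suc m < n + 2" using mjik(1) lV by simp
    ultimately have "V!(Suc m) = None" using dV[of "Suc m"] by simp
    then show False using Vj mjik(5) by simp
  qed
  have Vm: "V!m = Some (w!(m-1))" using dV[of m] m1 mn by simp
  have VSm: "V!(Suc m) = Some (w!m)" using dV[of "Suc m"] Sm by simp
  have Vj1: "V!(j-1) = Some (w!(j-1-1))"
  proof -
    have "j - 1 \<noteq> 0" "j - 1 \<le> n" "j - 1 < n + 2" using jk mn by auto
    then show ?thesis using dV[of "j-1"] by simp
  qed
  have Vi: "V!i = Some (w!(i-1))"
  proof -
    have "i \<noteq> 0" "i \<le> n" "i < n + 2" using i1 jk mn by auto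
    then show ?thesis using dV[of i] by simp
  qed
  have f1: "1 \<le> j - 1" using j2 by simp
  have f2: "j - 1 < m" using mjik j2 by simp
  have f3: "w!(j-1) = w!m" using Vj VSm mjik(5) by simp
  have f4: "w!(j-1-1) \<noteq> w!(m-1)" using Vj1 Vm mjik(2,6) by auto
  have f5: "i - 1 < j - 1" using mjik i1 by simp
  have f6: "j - 1 \<le> k - 1" using mjik by simp
  have f7: "k - 1 < m" using mjik j2 by simp
  have f8: "w!(i-1) = w!(k-1)" using Vi k2 mjik(10) by simp
  have "Fv w m" unfolding Fv_def using f1 f2 f3 f4 f5 f6 f7 f8 by blast
  then show ?thesis using m1 Sm unfolding n_def by (intro exI[of _ m]) auto
qed

theorem theorem2:
  fixes w :: "('a::finite) list"
  assumes "length w \<ge> 1"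
  shows "algA w \<longleftrightarrow> w \<in> L_UNIQ"
  using algA_iff[OF assms] F_not_uniq not_uniq_F by blast

end
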